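(* Let $\Phi=(G,\varphi)$ be a $\mathbb{T}$-gain graph on a connected graph $G$ with maximum vertex degree $\Delta$. Then $\rho(A(\Phi))=\Delta$ if and only if $G$ is $\Delta$-regular and either $\Phi$ or $-\Phi$ is balanced.
   Context: Graphs are finite, simple and undirected. $\mathbb{T}=\{z\in\mathbb{C}:|z|=1\}$. A $\mathbb{T}$-gain on $G$ is a map $\varphi$ from oriented edges to $\mathbb{T}$ with $\varphi(\overrightarrow{e_{ts}})=\varphi(\overrightarrow{e_{st}})^{-1}$; $A(\Phi)$ is the Hermitian matrix with $(s,t)$ entry $\varphi(\overrightarrow{e_{st}})$ if $v_s\sim v_t$, else $0$; $\rho$ is the spectral radius. $-\Phi$ denotes the gain graph $(G,-\varphi)$. The gain of a directed cycle is the product of the gains of its oriented edges; $\Phi$ is balanced if every directed cycle has gain $1$. *)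

theory Defs
  imports "HOL-Analysis.Analysis"
begin

definition simple_graph :: "('n::finite \<Rightarrow> 'n \<Rightarrow> bool) \<Rightarrow> bool" where
  "simple_graph E \<longleftrightarrow> (\<forall>u v. E u v \<longrightarrow> E v u) \<and> (\<forall>v. \<not> E v v)"

definition connected_graph :: "('n::finite \<Rightarrow> 'n \<Rightarrow> bool) \<Rightarrow> bool" where
  "connected_graph E \<longleftrightarrow> (\<forall>u v. E\<^sup>*\<^sup>* u v)"

definition degree :: "('n::finite \<Rightarrow> 'n \<Rightarrow> bool) \<Rightarrow> 'n \<Rightarrow> nat" where
  "degree E v = card {w. E v w}"

definition max_degree :: "('n::finite \<Rightarrow> 'n \<Rightarrow> bool) \<Rightarrow> nat" where
  "max_degree E = Max (range (degree E))"

definition regular :: "('n::finite \<Rightarrow> 'n \<Rightarrow> bool) \<Rightarrow> nat \<Rightarrow> bool" where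
  "regular E k \<longleftrightarrow> (\<forall>v. degree E v = k)"

text \<open>A T-gain on E: phi s t is the gain of the oriented edge from s to t;
  it has modulus one and phi t s = (phi s t)^-1 on edges.\<close>

definition T_gain :: "('n::finite \<Rightarrow> 'n \<Rightarrow> bool) \<Rightarrow> ('n \<Rightarrow> 'n \<Rightarrow> complex) \<Rightarrow> bool" where
  "T_gain E \<phi> \<longleftrightarrow> (\<forall>s t. E s t \<longrightarrow> cmod (\<phi> s t) = 1 \<and> \<phi> t s = inverse (\<phi> s t))"

definition gain_adj :: "('n::finite \<Rightarrow> 'n \<Rightarrow> bool) \<Rightarrow> ('n \<Rightarrow> 'n \<Rightarrow> complex) \<Rightarrow> complex^'n^'n" where
  "gain_adj E \<phi> = (\<chi> s t. if E s t then \<phi> s t else 0)"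

definition directed_cycle :: "('n::finite \<Rightarrow> 'n \<Rightarrow> bool) \<Rightarrow> 'n list \<Rightarrow> bool" where
  "directed_cycle E vs \<longleftrightarrow> distinct vs \<and> length vs \<ge> 3 \<and>
     (\<forall>i < length vs. E (vs ! i) (vs ! ((i + 1) mod length vs)))"

definition cycle_gain :: "('n \<Rightarrow> 'n \<Rightarrow> complex) \<Rightarrow> 'n list \<Rightarrow> complex" where
  "cycle_gain \<phi> vs = (\<Prod>i < length vs. \<phi> (vs ! i) (vs ! ((i + 1) mod length vs)))"

definition balanced :: "('n::finite \<Rightarrow> 'n \<Rightarrow> bool) \<Rightarrow> ('n \<Rightarrow> 'n \<Rightarrow> complex) \<Rightarrow> bool" where
  "balanced E \<phi> \<longleftrightarrow> (\<forall>vs. directed_cycle E vs \<longrightarrow> cycle_gain \<phi> vs = 1)"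

definition eigenvalues :: "complex^'n^'n \<Rightarrow> complex set" where
  "eigenvalues A = {c. \<exists>v. v \<noteq> 0 \<and> A *v v = c *s v}"

definition spectral_radius :: "complex^'n::finite^'n \<Rightarrow> real" where
  "spectral_radius A = Max (cmod ` eigenvalues A)"

end

theory Submission
  imports Defs "Jordan_Normal_Form.Char_Poly"
begin


lemma eig_jnf:
  fixes A :: "complex^'n::finite^'n"
  shows "finite (eigenvalues A) \<and> eigenvalues A \<noteq> {}"
proof -
  let ?n = "CARD('n)"
  obtain f :: "nat \<Rightarrow> 'n" where f: "bij_betw f {0..<?n} UNIV"
    using ex_bij_betw_nat_finite[of "UNIV :: 'n set"] by auto
  define g where "g = inv_into {0..<?n} f"
  have fg: "f (g s) = s" for s using f unfolding g_def by (meson UNIV_I bij_betw_inv_into_right)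
  have gl: "g s < ?n" for s using f unfolding g_def
    by (metis UNIV_I atLeastLessThan_iff bij_betw_def inv_into_into)
  have gf: "i < ?n \<Longrightarrow> g (f i) = i" for i using f unfolding g_def
    by (simp add: bij_betw_inv_into_left)
  define B :: "complex mat" where "B = Matrix.mat ?n ?n (\<lambda>(i,j). A $ f i $ f j)"
  have B: "B \<in> carrier_mat ?n ?n" unfolding B_def by auto
  have sumre: "(\<Sum>t\<in>UNIV. h t) = (\<Sum>j\<in>{0..<?n}. h (f j))" for h :: "'n \<Rightarrow> complex"
    using sum.reindex[of f "{0..<?n}" h] f unfolding bij_betw_def by auto
  have sub: "eigenvalues A \<subseteq> {k. eigenvalue B k}"
  proof
    fix k assume "k \<in> eigenvalues A"
    then obtain v where v0: "v \<noteq> 0" and ev: "A *v v = k *s v" unfolding eigenvalues_def by auto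
    define w where "w = Matrix.vec ?n (\<lambda>i. v $ f i)"
    have "w \<in> carrier_vec ?n" unfolding w_def by auto
    moreover have "w \<noteq> 0\<^sub>v ?n"
    proof
      assume "w = 0\<^sub>v ?n"
      then have "v $ f i = 0" if "i < ?n" for i using that unfolding w_def
        by (metis index_vec index_zero_vec(1))
      then have "v $ s = 0" for s using fg gl by metis
      then have "v = 0" by (metis Finite_Cartesian_Product.vec_eq_iff zero_index)
      then show False using v0 by simp
    qed
    moreover have "B *\<^sub>v w = k \<cdot>\<^sub>v w"
    proof (rule eq_vecI)
      fix i assume i: "i < dim_vec (k \<cdot>\<^sub>v w)"
      then have i': "i < ?n" unfolding w_def by simp
      have "(B *\<^sub>v w) $ i = (\<Sum>j\<in>{0..<?n}. A $ f i $ f j * v $ f j)"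
        using i' unfolding B_def w_def by (simp add: scalar_prod_def)
      also have "\<dots> = (A *v v) $ f i" by (simp add: matrix_vector_mult_def sumre)
      also have "\<dots> = (k \<cdot>\<^sub>v w) $ i" using ev i' unfolding w_def by simp
      finally show "(B *\<^sub>v w) $ i = (k \<cdot>\<^sub>v w) $ i" .
    qed (simp add: B_def w_def)
    ultimately show "k \<in> {k. eigenvalue B k}" using B
      unfolding eigenvalue_def eigenvector_def by auto
  qed
  have "finite {k. eigenvalue B k}"
  proof -
    have "{k. eigenvalue B k} = {k. poly (char_poly B) k = 0}"
      using eigenvalue_root_char_poly[OF B] by auto
    moreover have "char_poly B \<noteq> 0" using degree_monic_char_poly[OF B] by auto
    ultimately show ?thesis using poly_roots_finite by auto
  qed
  then have fin: "finite (eigenvalues A)" using sub finite_subset by auto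
  obtain k where "poly (char_poly B) k = 0"
  proof -
    have "?n > 0" by simp
    then have "Polynomial.degree (char_poly B) > 0" using degree_monic_char_poly[OF B] by auto
    then show ?thesis using fundamental_theorem_of_algebra_alt[of "char_poly B"] that by force
  qed
  then have "eigenvalue B k" using eigenvalue_root_char_poly[OF B] by auto
  then obtain w where w: "w \<in> carrier_vec ?n" "w \<noteq> 0\<^sub>v ?n" "B *\<^sub>v w = k \<cdot>\<^sub>v w"
    unfolding eigenvalue_def eigenvector_def using B by auto
  define v :: "complex^'n" where "v = (\<chi> s. w $ g s)"
  have "v \<noteq> 0"
  proof
    assume "v = 0"
    then have "w $ g s = 0" for s unfolding v_def by (metis vec_lambda_beta zero_index)
    then have "w $ i = 0" if "i < ?n" for i using gf that by metis
    then show False using w by (metis eq_vecI carrier_vecD index_zero_vec)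
  qed
  moreover have "A *v v = k *s v"
  proof -
    have "(A *v v) $ s = (k *s v) $ s" for s
    proof -
      have "(A *v v) $ s = (\<Sum>j\<in>{0..<?n}. A $ s $ f j * w $ j)"
        by (simp add: matrix_vector_mult_def sumre v_def gf)
      also have "\<dots> = (B *\<^sub>v w) $ g s"
      proof -
        have "(B *\<^sub>v w) $ g s = (\<Sum>j = 0..<?n. A $ f (g s) $ f j * w $ j)"
          using w(1) gl[of s] unfolding B_def by (simp add: scalar_prod_def)
        then show ?thesis by (simp add: fg)
      qed
      also have "\<dots> = (k *s v) $ s" using w gl unfolding v_def by simp
      finally show ?thesis .
    qed
    then show ?thesis by (simp add: Finite_Cartesian_Product.vec_eq_iff)
  qed
  ultimately show ?thesis using fin unfolding eigenvalues_def by auto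
qed



no_notation Matrix.vec_index (infixl "$" 100)

fun pg :: "('n \<Rightarrow> 'n \<Rightarrow> complex) \<Rightarrow> 'n list \<Rightarrow> complex" where
  "pg \<phi> (a # b # r) = \<phi> a b * pg \<phi> (b # r)"
| "pg \<phi> _ = 1"

fun walk :: "('n \<Rightarrow> 'n \<Rightarrow> bool) \<Rightarrow> 'n list \<Rightarrow> bool" where
  "walk E (a # b # r) = (E a b \<and> walk E (b # r))"
| "walk E _ = True"

lemma pg_append: "pg \<phi> (xs @ y # ys) = pg \<phi> (xs @ [y]) * pg \<phi> (y # ys)"
  by (induction xs rule: induct_list012) auto

lemma walk_append: "walk E (xs @ y # ys) \<longleftrightarrow> walk E (xs @ [y]) \<and> walk E (y # ys)"
  by (induction xs rule: induct_list012) auto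

lemma pg_prod: "pg \<phi> (xs @ [z]) = (\<Prod>i<length xs. \<phi> (xs ! i) ((xs @ [z]) ! Suc i))"
proof (induction xs)
  case (Cons x xs)
  show ?case
  proof (cases xs)
    case (Cons y ys)
    show ?thesis unfolding length_Cons prod.lessThan_Suc_shift
      using Cons.IH \<open>xs = y # ys\<close> by (simp del: prod.lessThan_Suc)
  qed simp
qed simp

lemma walk_nth: "walk E (xs @ [z]) \<Longrightarrow> i < length xs \<Longrightarrow> E (xs ! i) ((xs @ [z]) ! Suc i)"
proof (induction xs arbitrary: i rule: induct_list012)
  case (3 x y zs)
  then show ?case by (cases i) auto
qed auto

lemma nth_cyc: "vs \<noteq> [] \<Longrightarrow> i < length vs \<Longrightarrow> (vs @ [hd vs]) ! Suc i = vs ! ((i + 1) mod length vs)"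
proof (cases "Suc i < length vs")
  case False
  assume "vs \<noteq> []" "i < length vs"
  then have "Suc i = length vs" using False by simp
  then show ?thesis using \<open>vs \<noteq> []\<close> by (simp add: nth_append hd_conv_nth)
qed (auto simp: nth_append)

lemma cycle_gain_pg: "vs \<noteq> [] \<Longrightarrow> cycle_gain \<phi> vs = pg \<phi> (vs @ [hd vs])"
  unfolding cycle_gain_def pg_prod by (rule prod.cong) (auto simp: nth_cyc)

lemma walk_cycle: "vs \<noteq> [] \<Longrightarrow> walk E (vs @ [hd vs]) \<Longrightarrow> distinct vs \<Longrightarrow> length vs \<ge> 3
  \<Longrightarrow> directed_cycle E vs"
  unfolding directed_cycle_def using walk_nth[of E vs "hd vs"] nth_cyc[of vs] by auto

lemma closed_walk:
  assumes bal: "balanced E \<phi>" and sg: "simple_graph E" and tg: "T_gain E \<phi>"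
  shows "walk E p \<Longrightarrow> p \<noteq> [] \<Longrightarrow> hd p = last p \<Longrightarrow> pg \<phi> p = 1"
proof (induction "length p" arbitrary: p rule: less_induct)
  case less
  define vs where "vs = butlast p"
  define a where "a = last p"
  have p: "p = vs @ [a]" unfolding vs_def a_def using less.prems by simp
  show ?case
  proof (cases "vs = []")
    case True then show ?thesis using p by simp
  next
    case vne: False
    have "hd p = hd vs" using p vne by simp
    then have hda: "hd vs = a" using less.prems unfolding a_def by simp
    show ?thesis
    proof (cases "distinct vs")
      case True
      consider "length vs = 1" | "length vs = 2" | "length vs \<ge> 3" using vne
      proof -
        have "length vs \<noteq> 0" using vne by simp
        then show "(length vs = 1 \<Longrightarrow> thesis) \<Longrightarrow> (length vs = 2 \<Longrightarrow> thesis) \<Longrightarrow> (length vs \<ge> 3 \<Longrightarrow> thesis) \<Longrightarrow> thesis" for thesis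
          by linarith
      qed
      then show ?thesis
      proof cases
        case 1
        then have "p = [a, a]" using p hda by (cases vs) auto
        then show ?thesis using less.prems sg unfolding simple_graph_def by auto
      next
        case 2
        then obtain b where "vs = [a, b]" using 2 hda by (auto simp: length_Suc_conv numeral_2_eq_2)
        then have pp: "p = [a, b, a]" using p by simp
        then have "E a b" using less.prems by simp
        then have "\<phi> b a = inverse (\<phi> a b)" "\<phi> a b \<noteq> 0" using tg unfolding T_gain_def
          by (metis norm_zero zero_neq_one)+
        then show ?thesis using pp by simp
      next
        case 3
        have "directed_cycle E vs" using walk_cycle[OF vne] less.prems p hda True 3 by auto
        then have "cycle_gain \<phi> vs = 1" using bal unfolding balanced_def by auto
        then show ?thesis using cycle_gain_pg[OF vne] p hda by simp
      qed
    next
      case False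
      then obtain xs ys zs y where vsd: "vs = xs @ [y] @ ys @ [y] @ zs"
        using not_distinct_decomp by blast
      have p2: "p = xs @ y # (ys @ y # (zs @ [a]))" using p vsd by simp
      have wp: "walk E (xs @ y # (ys @ y # (zs @ [a])))" using less.prems(1) p2 by simp
      have w1: "walk E (xs @ [y])" and w23: "walk E (y # (ys @ y # (zs @ [a])))"
        using wp walk_append[of E xs y "ys @ y # zs @ [a]"] by auto
      have w2: "walk E (y # ys @ [y])" and w3: "walk E (y # zs @ [a])"
        using w23 walk_append[of E "y # ys" y "zs @ [a]"] by auto
      have g: "pg \<phi> p = pg \<phi> (xs @ [y]) * (pg \<phi> (y # ys @ [y]) * pg \<phi> (y # zs @ [a]))"
        using pg_append[of \<phi> xs y "ys @ y # zs @ [a]"] pg_append[of \<phi> "y # ys" y "zs @ [a]"] p2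
        by simp
      have "pg \<phi> (y # ys @ [y]) = 1"
        by (rule less.hyps) (use w2 p2 in auto)
      moreover have "pg \<phi> (xs @ y # zs @ [a]) = 1"
      proof (rule less.hyps)
        show "length (xs @ y # zs @ [a]) < length p" using p2 by simp
        show "walk E (xs @ y # zs @ [a])" using w1 w3 walk_append by metis
        show "xs @ y # zs @ [a] \<noteq> []" by simp
        show "hd (xs @ y # zs @ [a]) = last (xs @ y # zs @ [a])"
          using less.prems(3) p2 by (cases xs) auto
      qed
      ultimately show ?thesis using g pg_append[of \<phi> xs y "zs @ [a]"] by simp
    qed
  qed
qed


lemma pg_unit: "T_gain E \<phi> \<Longrightarrow> walk E p \<Longrightarrow> cmod (pg \<phi> p) = 1"
  by (induction p rule: induct_list012) (auto simp: T_gain_def norm_mult)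

lemma walk_rev: "simple_graph E \<Longrightarrow> walk E p \<Longrightarrow> walk E (rev p)"
proof (induction p rule: induct_list012)
  case (3 x y zs)
  then have "walk E (rev (y # zs))" "E y x" unfolding simple_graph_def by auto
  then show ?case using walk_append[of E "rev zs" y "[x]"] by simp
qed auto

lemma pg_rev: "T_gain E \<phi> \<Longrightarrow> walk E p \<Longrightarrow> pg \<phi> (rev p) = inverse (pg \<phi> p)"
proof (induction p rule: induct_list012)
  case (3 x y zs)
  then have "pg \<phi> (rev (y # zs)) = inverse (pg \<phi> (y # zs))" "E x y" by auto
  then have "\<phi> y x = inverse (\<phi> x y)" using 3(3) unfolding T_gain_def by auto
  then show ?case using pg_append[of \<phi> "rev zs" y "[x]"] \<open>pg \<phi> (rev (y # zs)) = _\<close>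
    by (simp add: mult.commute)
qed auto

lemma walk_exists: "E\<^sup>*\<^sup>* s r \<Longrightarrow> \<exists>p. walk E p \<and> p \<noteq> [] \<and> hd p = s \<and> last p = r"
proof (induction rule: converse_rtranclp_induct)
  case base
  then show ?case by (intro exI[of _ "[r]"]) auto
next
  case (step s s')
  then obtain p where "walk E p" "p \<noteq> []" "hd p = s'" "last p = r" by auto
  then show ?case using step(1) by (intro exI[of _ "s # p"]) (cases p, auto)
qed

lemma potential:
  assumes bal: "balanced E \<phi>" and sg: "simple_graph E" and tg: "T_gain E \<phi>"
    and con: "connected_graph E"
  shows "\<exists>x :: 'n::finite \<Rightarrow> complex. (\<forall>s. cmod (x s) = 1) \<and> (\<forall>s t. E s t \<longrightarrow> \<phi> s t * x t = x s)"
proof -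
  obtain r :: 'n where True by simp
  define P where "P s = (SOME p. walk E p \<and> p \<noteq> [] \<and> hd p = s \<and> last p = r)" for s
  have P: "walk E (P s) \<and> P s \<noteq> [] \<and> hd (P s) = s \<and> last (P s) = r" for s
    unfolding P_def by (rule someI_ex, rule walk_exists) (use con in \<open>auto simp: connected_graph_def\<close>)
  define x where "x s = pg \<phi> (P s)" for s
  have "cmod (x s) = 1" for s unfolding x_def using pg_unit[OF tg] P by auto
  moreover have "\<phi> s t * x t = x s" if st: "E s t" for s t
  proof -
    obtain pt where pt: "P t = pt @ [r]" using P[of t] by (metis append_butlast_last_id)
    obtain qs where qs: "rev (P s) = r # qs" using P[of s]
      by (metis hd_rev list.collapse rev_is_Nil_conv)
    define q where "q = s # pt @ r # qs"
    have wq: "walk E q" unfolding q_def using walk_append[of E "s # pt" r qs] P[of t] P[of s] pt qs st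
      walk_rev[OF sg, of "P s"] by (cases pt) auto
    have "last q = last (rev (P s))" unfolding q_def qs by simp
    also have "\<dots> = s" using P[of s] by (simp add: last_rev)
    finally have "pg \<phi> q = 1" using closed_walk[OF bal sg tg wq] unfolding q_def by simp
    moreover have "pg \<phi> q = pg \<phi> (s # P t) * pg \<phi> (rev (P s))"
      unfolding q_def qs pt using pg_append[of \<phi> "s # pt" r qs] by simp
    moreover have "pg \<phi> (s # P t) = \<phi> s t * x t"
      using P[of t] unfolding x_def by (cases "P t") auto
    moreover have "pg \<phi> (rev (P s)) = inverse (x s)" unfolding x_def using pg_rev[OF tg] P by auto
    moreover have "x s \<noteq> 0" using \<open>\<And>s. cmod (x s) = 1\<close>[of s] by auto
    ultimately show ?thesis by (simp add: field_simps)
  qed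
  ultimately show ?thesis by blast
qed

lemma adj_mult: "(gain_adj E \<phi> *v v) $ s = (\<Sum>t\<in>{t. E s t}. \<phi> s t * v $ t)"
proof -
  have "(gain_adj E \<phi> *v v) $ s = (\<Sum>t\<in>UNIV. if E s t then \<phi> s t * v $ t else 0)"
    unfolding gain_adj_def matrix_vector_mult_def by (simp, rule sum.cong) auto
  also have "\<dots> = (\<Sum>t\<in>{t\<in>UNIV. E s t}. \<phi> s t * v $ t)"
    by (rule sum.inter_filter[symmetric]) simp
  finally show ?thesis by simp
qed

lemma eigen_from_potential:
  fixes x :: "'n::finite \<Rightarrow> complex"
  assumes reg: "regular E d" and x: "\<forall>s. cmod (x s) = 1"
    and e: "\<forall>s t. E s t \<longrightarrow> \<phi> s t * x t = \<epsilon> * x s"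
  shows "\<epsilon> * of_nat d \<in> eigenvalues (gain_adj E \<phi>)"
proof -
  define v where "v = (\<chi> s. x s)"
  have "v \<noteq> 0"
  proof
    assume "v = 0"
    then have "x s = 0" for s unfolding v_def by (metis vec_lambda_beta zero_index)
    then show False using x by auto
  qed
  moreover have "gain_adj E \<phi> *v v = (\<epsilon> * of_nat d) *s v"
  proof -
    have "(gain_adj E \<phi> *v v) $ s = ((\<epsilon> * of_nat d) *s v) $ s" for s
    proof -
      have "(gain_adj E \<phi> *v v) $ s = (\<Sum>t\<in>{t. E s t}. \<epsilon> * x s)"
        unfolding adj_mult v_def using e by simp
      also have "\<dots> = of_nat (degree E s) * (\<epsilon> * x s)" by (simp add: degree_def)
      also have "\<dots> = ((\<epsilon> * of_nat d) *s v) $ s" using reg unfolding regular_def v_def by simp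
      finally show ?thesis .
    qed
    then show ?thesis by (simp add: Finite_Cartesian_Product.vec_eq_iff)
  qed
  ultimately show ?thesis unfolding eigenvalues_def by auto
qed


lemma cmod_diff_sq: "(cmod (a - b))^2 = (cmod a)^2 + (cmod b)^2 - 2 * Re (cnj b * a)"
  unfolding cmod_power2 by (simp add: power2_eq_square algebra_simps)

lemma eq_case:
  fixes z :: "'a \<Rightarrow> complex"
  assumes fin: "finite T" and d: "card T = d" "d > 0" and le: "\<forall>t\<in>T. cmod (z t) \<le> M"
    and eq: "cmod (\<Sum>t\<in>T. z t) = real d * M"
  shows "\<forall>t\<in>T. z t = (\<Sum>t\<in>T. z t) / of_nat d"
proof
  fix t0 assume t0: "t0 \<in> T"
  define w where "w = (\<Sum>t\<in>T. z t) / of_nat d"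
  have sw: "(\<Sum>t\<in>T. z t) = of_nat d * w" unfolding w_def using d by simp
  have cw: "cmod w = M" using eq d unfolding w_def by (simp add: norm_divide)
  have re_le: "Re (cnj w * z t) \<le> M * M" if "t \<in> T" for t
  proof -
    have "Re (cnj w * z t) \<le> cmod (cnj w * z t)" by (rule complex_Re_le_cmod)
    also have "\<dots> = M * cmod (z t)" by (simp add: norm_mult cw)
    also have "\<dots> \<le> M * M" using le that cw norm_ge_zero[of w]
      by (intro mult_left_mono) auto
    finally show ?thesis .
  qed
  have "(\<Sum>t\<in>T. Re (cnj w * z t)) = Re (cnj w * (\<Sum>t\<in>T. z t))"
    by (simp add: sum_distrib_left)
  also have "\<dots> = real d * (M * M)"
  proof -
    have "Re w * Re w + Im w * Im w = M * M" using cw cmod_power2[of w] by (simp add: power2_eq_square)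
    moreover have "Re (cnj w * (of_nat d * w)) = real d * (Re w * Re w + Im w * Im w)"
      by (simp add: algebra_simps)
    ultimately show ?thesis unfolding sw by simp
  qed
  finally have "(\<Sum>t\<in>T. M * M - Re (cnj w * z t)) = 0" using d by (simp add: sum_subtractf)
  then have "\<forall>t\<in>T. M * M - Re (cnj w * z t) = 0"
  proof -
    have "\<forall>t\<in>T. 0 \<le> M * M - Re (cnj w * z t)" using re_le by auto
    then show ?thesis using sum_nonneg_eq_0_iff[OF fin, of "\<lambda>t. M * M - Re (cnj w * z t)"]
        \<open>(\<Sum>t\<in>T. M * M - Re (cnj w * z t)) = 0\<close> by simp
  qed
  then have r: "Re (cnj w * z t0) = M * M" using t0 by auto
  have "(cmod (z t0 - w))^2 \<le> 0"
  proof -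
    have "cmod (z t0) * cmod (z t0) \<le> M * M" using le t0 cw norm_ge_zero[of w]
      by (intro mult_mono) auto
    then show ?thesis unfolding cmod_diff_sq r cw by (simp add: power2_eq_square)
  qed
  then show "z t0 = w" by simp
qed

lemma deg_le: "degree E s \<le> max_degree E"
  unfolding max_degree_def by (rule Max_ge) auto

lemma telescope:
  fixes g :: "nat \<Rightarrow> complex"
  assumes "\<forall>i. g i \<noteq> 0" "g k = g 0"
  shows "(\<Prod>i<k. g i / g (Suc i)) = 1"
proof -
  have "g 0 * (\<Prod>i<k. g (Suc i)) = (\<Prod>i<k. g i) * g 0"
    using prod.lessThan_Suc_shift[of g k] prod.lessThan_Suc[of g k] assms by simp
  then have "(\<Prod>i<k. g (Suc i)) = (\<Prod>i<k. g i)" using assms by (simp add: mult.commute)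
  moreover have "(\<Prod>i<k. g i) \<noteq> 0" using assms by simp
  ultimately show ?thesis by (simp add: prod_dividef)
qed

lemma balanced_from_potential:
  fixes u :: "'n::finite \<Rightarrow> complex"
  assumes u: "\<forall>s. u s \<noteq> 0" and e: "\<forall>s t. E s t \<longrightarrow> \<psi> s t * u t = u s"
  shows "balanced E \<psi>"
  unfolding balanced_def
proof (intro allI impI)
  fix vs assume dc: "directed_cycle E vs"
  define k where "k = length vs"
  have k: "k \<ge> 3" using dc unfolding directed_cycle_def k_def by auto
  define g where "g i = u (vs ! (i mod k))" for i
  have "cycle_gain \<psi> vs = (\<Prod>i<k. g i / g (Suc i))"
    unfolding cycle_gain_def k_def[symmetric]
  proof (rule prod.cong)
    fix i assume i: "i \<in> {..<k}"
    have "E (vs ! i) (vs ! ((i + 1) mod k))" using dc i unfolding directed_cycle_def k_def by auto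
    then have "\<psi> (vs ! i) (vs ! ((i + 1) mod k)) = u (vs ! i) / u (vs ! ((i + 1) mod k))"
      using e u by (metis nonzero_eq_divide_eq)
    then show "\<psi> (vs ! i) (vs ! ((i + 1) mod k)) = g i / g (Suc i)" unfolding g_def using i by simp
  qed simp
  also have "\<dots> = 1" by (rule telescope) (use u k in \<open>auto simp: g_def\<close>)
  finally show "cycle_gain \<psi> vs = 1" .
qed


lemma T_gain_neg: "T_gain E \<phi> \<Longrightarrow> T_gain E (\<lambda>s t. - \<phi> s t)"
  unfolding T_gain_def by simp

lemma row_ineq:
  assumes tg: "T_gain E \<phi>" and ev: "gain_adj E \<phi> *v v = c *s v" and le: "\<forall>t. cmod (v $ t) \<le> M"
  shows "cmod c * cmod (v $ s) = cmod (\<Sum>t\<in>{t. E s t}. \<phi> s t * v $ t)"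
    and "cmod (\<Sum>t\<in>{t. E s t}. \<phi> s t * v $ t) \<le> real (degree E s) * M"
proof -
  have "(gain_adj E \<phi> *v v) $ s = c * v $ s" using ev by simp
  then show "cmod c * cmod (v $ s) = cmod (\<Sum>t\<in>{t. E s t}. \<phi> s t * v $ t)"
    unfolding adj_mult by (simp add: norm_mult)
  have "cmod (\<Sum>t\<in>{t. E s t}. \<phi> s t * v $ t) \<le> (\<Sum>t\<in>{t. E s t}. cmod (\<phi> s t * v $ t))"
    by (rule norm_sum)
  also have "\<dots> \<le> of_nat (card {t. E s t}) * M"
  proof (rule sum_bounded_above)
    fix t assume "t \<in> {t. E s t}"
    then have "cmod (\<phi> s t) = 1" using tg unfolding T_gain_def by auto
    then show "cmod (\<phi> s t * v $ t) \<le> M" using le by (simp add: norm_mult)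
  qed
  finally show "cmod (\<Sum>t\<in>{t. E s t}. \<phi> s t * v $ t) \<le> real (degree E s) * M"
    by (simp add: degree_def)
qed

lemma max_entry:
  fixes v :: "complex^'n::finite"
  assumes "v \<noteq> 0"
  obtains M s0 where "M > 0" "\<forall>t. cmod (v $ t) \<le> M" "cmod (v $ s0) = M"
proof -
  define M where "M = Max (range (\<lambda>t. cmod (v $ t)))"
  have "M \<in> range (\<lambda>t. cmod (v $ t))" unfolding M_def by (rule Max_in) auto
  then obtain s0 where s0: "cmod (v $ s0) = M" by auto
  have le: "\<forall>t. cmod (v $ t) \<le> M" unfolding M_def by (auto intro: Max_ge)
  have "M > 0"
  proof (rule ccontr)
    assume "\<not> M > 0"
    then have "cmod (v $ t) \<le> 0" for t using le[rule_format, of t] by linarith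
    then have "v $ t = 0" for t by simp
    then have "v = 0" by (simp add: Finite_Cartesian_Product.vec_eq_iff)
    then show False using assms by simp
  qed
  then show ?thesis using that le s0 by blast
qed

lemma eig_bound:
  assumes tg: "T_gain E \<phi>" and c: "c \<in> eigenvalues (gain_adj E \<phi>)"
  shows "cmod c \<le> real (max_degree E)"
proof -
  obtain v where v: "v \<noteq> 0" "gain_adj E \<phi> *v v = c *s v" using c unfolding eigenvalues_def by auto
  obtain M s0 where M: "M > 0" "\<forall>t. cmod (v $ t) \<le> M" "cmod (v $ s0) = M"
    using max_entry[OF v(1)] by blast
  have "cmod c * M \<le> real (degree E s0) * M"
    using row_ineq[OF tg v(2) M(2), of s0] M(3) by simp
  also have "\<dots> \<le> real (max_degree E) * M" using M(1) deg_le[of E s0] by simp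
  finally show ?thesis using M(1) by simp
qed

lemma forward:
  assumes sg: "simple_graph E" and con: "connected_graph E" and tg: "T_gain E \<phi>"
    and c: "c \<in> eigenvalues (gain_adj E \<phi>)" and cD: "cmod c = real (max_degree E)"
    and D: "max_degree E > 0"
  shows "regular E (max_degree E) \<and> (balanced E \<phi> \<or> balanced E (\<lambda>s t. - \<phi> s t))"
proof -
  define D where "D = max_degree E"
  obtain v where v: "v \<noteq> 0" "gain_adj E \<phi> *v v = c *s v" using c unfolding eigenvalues_def by auto
  obtain M s0 where M: "M > 0" "\<forall>t. cmod (v $ t) \<le> M" "cmod (v $ s0) = M"
    using max_entry[OF v(1)] by blast
  define \<epsilon> where "\<epsilon> = c / of_nat D"
  have key: "degree E s = D \<and> (\<forall>t. E s t \<longrightarrow> \<phi> s t * v $ t = \<epsilon> * v $ s \<and> cmod (v $ t) = M)"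
    if sM: "cmod (v $ s) = M" for s
  proof -
    define \<sigma> where "\<sigma> = (\<Sum>t\<in>{t. E s t}. \<phi> s t * v $ t)"
    have r1: "real D * M = cmod \<sigma>" using row_ineq(1)[OF tg v(2) M(2), of s] sM cD
      unfolding \<sigma>_def D_def by simp
    have r2: "cmod \<sigma> \<le> real (degree E s) * M" using row_ineq(2)[OF tg v(2) M(2), of s]
      unfolding \<sigma>_def by simp
    have "degree E s \<le> D" using deg_le unfolding D_def by auto
    then have "real (degree E s) * M \<le> real D * M" using M(1) by simp
    then have dd: "real (degree E s) * M = real D * M" using r1 r2 by linarith
    then have ds: "degree E s = D" using M(1) by simp
    have "\<forall>t\<in>{t. E s t}. \<phi> s t * v $ t = \<sigma> / of_nat D"
      unfolding \<sigma>_def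
    proof (rule eq_case)
      show "finite {t. E s t}" by simp
      show "card {t. E s t} = D" using ds unfolding degree_def .
      show "D > 0" using D unfolding D_def .
      show "\<forall>t\<in>{t. E s t}. cmod (\<phi> s t * v $ t) \<le> M"
        using tg M(2) unfolding T_gain_def by (simp add: norm_mult)
      show "cmod (\<Sum>t\<in>{t. E s t}. \<phi> s t * v $ t) = real D * M" using r1 unfolding \<sigma>_def by simp
    qed
    moreover have "\<sigma> = c * v $ s"
      using v(2) unfolding \<sigma>_def adj_mult[symmetric] by simp
    ultimately have e: "\<phi> s t * v $ t = \<epsilon> * v $ s" if "E s t" for t
      using that unfolding \<epsilon>_def by simp
    have "cmod (v $ t) = M" if "E s t" for t
    proof -
      have "cmod (\<phi> s t) = 1" using tg that unfolding T_gain_def by auto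
      then have "cmod (v $ t) = cmod (\<phi> s t * v $ t)" by (simp add: norm_mult)
      also have "\<dots> = cmod (\<epsilon> * v $ s)" using e[OF that] by simp
      also have "\<dots> = M" unfolding \<epsilon>_def using cD D sM unfolding D_def
        by (simp add: norm_mult norm_divide)
      finally show ?thesis .
    qed
    then show ?thesis using ds e by blast
  qed
  have allM: "cmod (v $ u) = M" for u
  proof -
    have "E\<^sup>*\<^sup>* s0 u" using con unfolding connected_graph_def by auto
    then show ?thesis
    proof (induction rule: rtranclp_induct)
      case base then show ?case using M(3) .
    next
      case (step y z) then show ?case using key by blast
    qed
  qed
  have reg: "regular E D" unfolding regular_def
  proof
    fix u show "degree E u = D" using key[OF allM[of u]] by simp
  qed
  have nz: "\<forall>u. v $ u \<noteq> 0"
  proof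
    fix u show "v $ u \<noteq> 0" using allM[of u] M(1) by auto
  qed
  have "degree E s0 > 0" using reg D unfolding regular_def D_def by auto
  then have "{t. E s0 t} \<noteq> {}" unfolding degree_def by (metis card.empty less_irrefl)
  then obtain t where st: "E s0 t" by auto
  then have ts: "E t s0" using sg unfolding simple_graph_def by auto
  have e1: "\<phi> s0 t * v $ t = \<epsilon> * v $ s0" using key[OF allM[of s0]] st by simp
  have e2: "\<phi> t s0 * v $ s0 = \<epsilon> * v $ t" using key[OF allM[of t]] ts by simp
  have inv: "\<phi> t s0 = inverse (\<phi> s0 t)" and c1: "cmod (\<phi> s0 t) = 1" using tg st unfolding T_gain_def by auto
  have nz0: "\<phi> s0 t \<noteq> 0" using c1 by auto
  have "(\<phi> s0 t * v $ t) * (\<phi> t s0 * v $ s0) = v $ t * v $ s0" unfolding inv using nz0 by (simp add: field_simps)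
  then have "\<epsilon> * \<epsilon> * (v $ s0 * v $ t) = 1 * (v $ s0 * v $ t)" unfolding e1 e2 by (simp add: algebra_simps)
  moreover have "v $ s0 * v $ t \<noteq> 0" using nz by simp
  ultimately have "\<epsilon> * \<epsilon> = 1" by (simp only: mult_cancel_right) simp
  then have "(\<epsilon> - 1) * (\<epsilon> + 1) = 0" by (simp add: algebra_simps)
  then have "\<epsilon> = 1 \<or> \<epsilon> = -1" by (simp add: eq_neg_iff_add_eq_0)
  then have "balanced E \<phi> \<or> balanced E (\<lambda>s t. - \<phi> s t)"
  proof
    assume e: "\<epsilon> = 1"
    have "\<forall>s t. E s t \<longrightarrow> \<phi> s t * v $ t = v $ s"
    proof (intro allI impI)
      fix s t assume "E s t" then show "\<phi> s t * v $ t = v $ s" using key[OF allM[of s]] e by simp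
    qed
    then show ?thesis using balanced_from_potential[of "\<lambda>s. v $ s" E \<phi>] nz by blast
  next
    assume e: "\<epsilon> = -1"
    have "\<forall>s t. E s t \<longrightarrow> - \<phi> s t * v $ t = v $ s"
    proof (intro allI impI)
      fix s t assume "E s t" then show "- \<phi> s t * v $ t = v $ s" using key[OF allM[of s]] e by simp
    qed
    then show ?thesis using balanced_from_potential[of "\<lambda>s. v $ s" E "\<lambda>s t. - \<phi> s t"] nz by blast
  qed
  then show ?thesis using reg unfolding D_def by blast
qed

theorem main_with:
  fixes E :: "'n::finite \<Rightarrow> 'n \<Rightarrow> bool" and \<phi> :: "'n \<Rightarrow> 'n \<Rightarrow> complex"
  assumes sg: "simple_graph E" and con: "connected_graph E" and tg: "T_gain E \<phi>"
    and fin: "finite (eigenvalues (gain_adj E \<phi>))" and ne: "eigenvalues (gain_adj E \<phi>) \<noteq> {}"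
  shows "spectral_radius (gain_adj E \<phi>) = real (max_degree E) \<longleftrightarrow>
         regular E (max_degree E) \<and> (balanced E \<phi> \<or> balanced E (\<lambda>s t. - \<phi> s t))"
proof
  assume sr: "spectral_radius (gain_adj E \<phi>) = real (max_degree E)"
  have "spectral_radius (gain_adj E \<phi>) \<in> cmod ` eigenvalues (gain_adj E \<phi>)"
    unfolding spectral_radius_def using fin ne by (intro Max_in) auto
  then obtain c where c: "c \<in> eigenvalues (gain_adj E \<phi>)" "cmod c = real (max_degree E)"
    using sr by auto
  show "regular E (max_degree E) \<and> (balanced E \<phi> \<or> balanced E (\<lambda>s t. - \<phi> s t))"
  proof (cases "max_degree E = 0")
    case True
    have noE: "\<not> E s t" for s t
    proof
      assume "E s t"
      then have "degree E s > 0" unfolding degree_def by (auto simp: card_gt_0_iff)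
      then show False using deg_le[of E s] True by simp
    qed
    have "regular E (max_degree E)" unfolding regular_def using deg_le True by (metis le_zero_eq)
    moreover have "balanced E \<phi>" unfolding balanced_def directed_cycle_def
    proof (intro allI impI)
      fix vs :: "'n list"
      assume h: "distinct vs \<and> 3 \<le> length vs \<and> (\<forall>i<length vs. E (vs ! i) (vs ! ((i + 1) mod length vs)))"
      then have "0 < length vs" by auto
      have A: "\<forall>i<length vs. E (vs ! i) (vs ! ((i + 1) mod length vs))" using conjunct2[OF conjunct2[OF h]] .
      have "E (vs ! 0) (vs ! ((0 + 1) mod length vs))" by (rule A[rule_format]) fact
      then show "cycle_gain \<phi> vs = 1" using noE by simp
    qed
    ultimately show ?thesis by blast
  next
    case False
    then show ?thesis using forward[OF sg con tg c] by simp
  qed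
next
  assume rhs: "regular E (max_degree E) \<and> (balanced E \<phi> \<or> balanced E (\<lambda>s t. - \<phi> s t))"
  have "\<exists>c \<in> eigenvalues (gain_adj E \<phi>). cmod c = real (max_degree E)"
  proof (cases "balanced E \<phi>")
    case True
    obtain x where x: "\<forall>s. cmod (x s) = 1" "\<forall>s t. E s t \<longrightarrow> \<phi> s t * x t = x s"
      using potential[OF True sg tg con] by blast
    have "1 * of_nat (max_degree E) \<in> eigenvalues (gain_adj E \<phi>)"
      by (rule eigen_from_potential) (use rhs x in auto)
    then show ?thesis by force
  next
    case False
    then have b: "balanced E (\<lambda>s t. - \<phi> s t)" using rhs by blast
    obtain x where x: "\<forall>s. cmod (x s) = 1" "\<forall>s t. E s t \<longrightarrow> - \<phi> s t * x t = x s"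
      using potential[OF b sg T_gain_neg[OF tg] con] by blast
    have "(-1) * of_nat (max_degree E) \<in> eigenvalues (gain_adj E \<phi>)"
    proof (rule eigen_from_potential)
      show "\<forall>s t. E s t \<longrightarrow> \<phi> s t * x t = - 1 * x s" using x(2)
        by (metis minus_minus minus_mult_left mult_minus1)
    qed (use rhs x in auto)
    then show ?thesis by force
  qed
  then obtain c where c: "c \<in> eigenvalues (gain_adj E \<phi>)" "cmod c = real (max_degree E)" by blast
  show "spectral_radius (gain_adj E \<phi>) = real (max_degree E)"
    unfolding spectral_radius_def
  proof (rule Max_eqI)
    show "finite (cmod ` eigenvalues (gain_adj E \<phi>))" using fin by simp
    show "y \<le> real (max_degree E)" if "y \<in> cmod ` eigenvalues (gain_adj E \<phi>)" for y
      using that eig_bound[OF tg] by auto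
    show "real (max_degree E) \<in> cmod ` eigenvalues (gain_adj E \<phi>)" using c by force
  qed
qed


theorem theorem5p3:
  fixes E :: "'n::finite \<Rightarrow> 'n \<Rightarrow> bool" and \<phi> :: "'n \<Rightarrow> 'n \<Rightarrow> complex"
  assumes "simple_graph E" and "connected_graph E" and "T_gain E \<phi>"
  shows "spectral_radius (gain_adj E \<phi>) = real (max_degree E) \<longleftrightarrow>
         regular E (max_degree E) \<and> (balanced E \<phi> \<or> balanced E (\<lambda>s t. - \<phi> s t))"
  using main_with[OF assms] eig_jnf[of "gain_adj E \<phi>"] by blast

end
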